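(* Let $G$ be an abelian group (written multiplicatively) and let $A$ and $B$ be nonempty finite subsets of $G$. Assume that for every nontrivial finite subgroup $H$ of $G$ and all elements $a,b\in G$ we have $|aH\cap A|+|bH\cap B|\leq |H|+1$. Then for all nonempty subsets $S\subset A$ and $T\subset B$, we have $|ST|\geq |S|+|T|-1$.
   Context: For subsets $S,T$ of $G$, $ST=\{st: s\in S, t\in T\}$. *)

theory Defs
  imports "HOL-Algebra.Coset"
begin

end

theory Submission
  imports Defs
begin


definition stab :: "('a, 'b) monoid_scheme \<Rightarrow> 'a set \<Rightarrow> 'a set" where
  "stab G X = {g \<in> carrier G. \<forall>x\<in>X. g \<otimes>\<^bsub>G\<^esub> x \<in> X}"

definition kineq :: "('a, 'b) monoid_scheme \<Rightarrow> 'a set \<Rightarrow> 'a set \<Rightarrow> bool" where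
  "kineq G A B \<longleftrightarrow> card (A <#>\<^bsub>G\<^esub> stab G (A <#>\<^bsub>G\<^esub> B)) + card (B <#>\<^bsub>G\<^esub> stab G (A <#>\<^bsub>G\<^esub> B))
     \<le> card (A <#>\<^bsub>G\<^esub> B) + card (stab G (A <#>\<^bsub>G\<^esub> B))"

context comm_group begin

lemma lcancel: "a \<in> carrier G \<Longrightarrow> x \<in> carrier G \<Longrightarrow> y \<in> carrier G \<Longrightarrow> a \<otimes> x = a \<otimes> y \<longleftrightarrow> x = y"
  by (metis m_comm right_cancel)

lemma mem_set_mult: "x \<in> A <#> B \<longleftrightarrow> (\<exists>a\<in>A. \<exists>b\<in>B. x = a \<otimes> b)"
  unfolding set_mult_def by auto

lemma set_mult_img: "A <#> B = (\<lambda>(a,b). a \<otimes> b) ` (A \<times> B)"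
  unfolding set_mult_def by auto

lemma finite_set_mult: "finite A \<Longrightarrow> finite B \<Longrightarrow> finite (A <#> B)"
  unfolding set_mult_img by auto

lemma set_mult_sub: "A \<subseteq> carrier G \<Longrightarrow> B \<subseteq> carrier G \<Longrightarrow> A <#> B \<subseteq> carrier G"
  unfolding set_mult_def by auto

lemma inj_lmult: "a \<in> carrier G \<Longrightarrow> X \<subseteq> carrier G \<Longrightarrow> inj_on (\<lambda>x. a \<otimes> x) X"
  unfolding inj_on_def using lcancel by blast

lemma inj_rmult: "a \<in> carrier G \<Longrightarrow> X \<subseteq> carrier G \<Longrightarrow> inj_on (\<lambda>x. x \<otimes> a) X"
  unfolding inj_on_def using right_cancel by blast

lemma card_lmult: "a \<in> carrier G \<Longrightarrow> X \<subseteq> carrier G \<Longrightarrow> card ((\<lambda>x. a \<otimes> x) ` X) = card X"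
  by (rule card_image[OF inj_lmult])

lemma card_rmult: "a \<in> carrier G \<Longrightarrow> X \<subseteq> carrier G \<Longrightarrow> card ((\<lambda>x. x \<otimes> a) ` X) = card X"
  by (rule card_image[OF inj_rmult])

lemma card_le_set_mult1:
  assumes "finite A" "finite B" "b \<in> B" "A \<subseteq> carrier G" "B \<subseteq> carrier G"
  shows "card A \<le> card (A <#> B)"
proof -
  have bc: "b \<in> carrier G" using assms by blast
  have "card A = card ((\<lambda>x. x \<otimes> b) ` A)" using assms bc by (simp add: card_rmult)
  also have "\<dots> \<le> card (A <#> B)"
  proof (rule card_mono[OF finite_set_mult[OF assms(1,2)]])
    show "(\<lambda>x. x \<otimes> b) ` A \<subseteq> A <#> B"
    proof
      fix y assume "y \<in> (\<lambda>x. x \<otimes> b) ` A"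
      then obtain x where "x \<in> A" "y = x \<otimes> b" by blast
      then show "y \<in> A <#> B" using assms(3) unfolding mem_set_mult by blast
    qed
  qed
  finally show ?thesis .
qed

lemma card_le_set_mult2:
  assumes "finite A" "finite B" "a \<in> A" "A \<subseteq> carrier G" "B \<subseteq> carrier G"
  shows "card B \<le> card (A <#> B)"
proof -
  have ac: "a \<in> carrier G" using assms by blast
  have "card B = card ((\<lambda>x. a \<otimes> x) ` B)" using assms ac by (simp add: card_lmult)
  also have "\<dots> \<le> card (A <#> B)"
  proof (rule card_mono[OF finite_set_mult[OF assms(1,2)]])
    show "(\<lambda>x. a \<otimes> x) ` B \<subseteq> A <#> B"
    proof
      fix y assume "y \<in> (\<lambda>x. a \<otimes> x) ` B"
      then obtain x where "x \<in> B" "y = a \<otimes> x" by blast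
      then show "y \<in> A <#> B" using assms(3) unfolding mem_set_mult by blast
    qed
  qed
  finally show ?thesis .
qed

lemma stab_perm:
  assumes "finite X" "X \<subseteq> carrier G" "g \<in> stab G X"
  shows "(\<lambda>x. g \<otimes> x) ` X = X"
proof (rule endo_inj_surj)
  show "inj_on (\<lambda>x. g \<otimes> x) X" using assms by (intro inj_lmult) (auto simp: stab_def)
qed (use assms in \<open>auto simp: stab_def\<close>)

lemma stab_subgroup:
  assumes "finite X" "X \<subseteq> carrier G"
  shows "subgroup (stab G X) G"
proof (rule subgroupI)
  show "stab G X \<subseteq> carrier G" by (auto simp: stab_def)
  have "\<one> \<in> stab G X" using assms unfolding stab_def by auto
  then show "stab G X \<noteq> {}" by blast
  fix a b assume a: "a \<in> stab G X" and b: "b \<in> stab G X"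
  have ac: "a \<in> carrier G" and bc: "b \<in> carrier G" using a b by (auto simp: stab_def)
  have "\<forall>x\<in>X. (a \<otimes> b) \<otimes> x \<in> X"
  proof
    fix x assume "x \<in> X"
    then have "x \<in> carrier G" using assms by blast
    then have "(a \<otimes> b) \<otimes> x = a \<otimes> (b \<otimes> x)" using ac bc by (simp add: m_assoc)
    then show "(a \<otimes> b) \<otimes> x \<in> X" using a b \<open>x \<in> X\<close> by (simp add: stab_def)
  qed
  then show "a \<otimes> b \<in> stab G X" using ac bc by (simp add: stab_def)
  have "\<forall>x\<in>X. inv a \<otimes> x \<in> X"
  proof
    fix x assume x: "x \<in> X"
    then have "x \<in> (\<lambda>x. a \<otimes> x) ` X" using stab_perm[OF assms a] by simp
    then obtain y where y: "y \<in> X" "x = a \<otimes> y" by auto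
    have yc: "y \<in> carrier G" using y assms by blast
    have "inv a \<otimes> x = y" using y ac yc by (simp add: m_assoc[symmetric])
    then show "inv a \<otimes> x \<in> X" using y by simp
  qed
  then show "inv a \<in> stab G X" using ac by (simp add: stab_def)
qed

lemma one_stab: "X \<subseteq> carrier G \<Longrightarrow> \<one> \<in> stab G X"
  unfolding stab_def by auto

lemma stab_finite:
  assumes "finite X" "X \<subseteq> carrier G" "x0 \<in> X"
  shows "finite (stab G X)"
proof -
  have x0c: "x0 \<in> carrier G" using assms by blast
  have "stab G X \<subseteq> (\<lambda>y. y \<otimes> inv x0) ` X"
  proof
    fix g assume g: "g \<in> stab G X"
    then have gx: "g \<otimes> x0 \<in> X" and gc: "g \<in> carrier G" using assms by (auto simp: stab_def)
    have "(g \<otimes> x0) \<otimes> inv x0 = g" using gc x0c by (simp add: m_assoc)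
    then show "g \<in> (\<lambda>y. y \<otimes> inv x0) ` X" using gx by (metis image_eqI)
  qed
  then show ?thesis using assms finite_subset by blast
qed

lemma periodic_set_mult:
  assumes "A \<subseteq> carrier G" "\<one> \<in> K" "\<And>a k. a \<in> A \<Longrightarrow> k \<in> K \<Longrightarrow> a \<otimes> k \<in> A"
  shows "A <#> K = A"
proof
  show "A <#> K \<subseteq> A" using assms(3) by (auto simp: mem_set_mult)
  show "A \<subseteq> A <#> K"
  proof
    fix a assume a: "a \<in> A"
    then have "a = a \<otimes> \<one>" using assms(1) by auto
    then show "a \<in> A <#> K" using a assms(2) unfolding mem_set_mult by blast
  qed
qed

lemma l_coset_img: "a <# H = (\<lambda>h. a \<otimes> h) ` H"
  unfolding l_coset_def by auto

end

context comm_group begin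


lemma inv_cancel_l: "x \<in> carrier G \<Longrightarrow> y \<in> carrier G \<Longrightarrow> inv x \<otimes> (x \<otimes> y) = y"
  by (simp add: m_assoc[symmetric])

lemma inv_cancel_r: "x \<in> carrier G \<Longrightarrow> y \<in> carrier G \<Longrightarrow> x \<otimes> (inv x \<otimes> y) = y"
  by (simp add: m_assoc[symmetric])

lemma set_mult_mono1: "A \<subseteq> A' \<Longrightarrow> A <#> B \<subseteq> A' <#> B"
  unfolding mem_set_mult set_mult_def by blast

lemma kneser_step:
  assumes fA: "finite A" and nA: "A \<noteq> {}" and sA: "A \<subseteq> carrier G"
      and fB: "finite B" and nB: "B \<noteq> {}" and sB: "B \<subseteq> carrier G"
      and IH: "\<And>A' B'. finite A' \<Longrightarrow> A' \<noteq> {} \<Longrightarrow> A' \<subseteq> carrier G \<Longrightarrow> finite B' \<Longrightarrow> B' \<noteq> {} \<Longrightarrow> B' \<subseteq> carrier G \<Longrightarrow>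
         card (A' <#> B') < card (A <#> B) \<or>
         (card (A' <#> B') = card (A <#> B) \<and> (card A + card B < card A' + card B' \<or>
            (card A' + card B' = card A + card B \<and> card B' < card B))) \<Longrightarrow> kineq G A' B'"
  shows "kineq G A B"
proof (rule ccontr)
  assume neg: "\<not> kineq G A B"
  define C where "C = A <#> B"
  define H where "H = stab G C"
  have fC: "finite C" using fA fB by (simp add: C_def finite_set_mult)
  have sC: "C \<subseteq> carrier G" using sA sB by (simp add: C_def set_mult_sub)
  have mC: "\<And>a b. a \<in> A \<Longrightarrow> b \<in> B \<Longrightarrow> a \<otimes> b \<in> C" by (auto simp: C_def mem_set_mult)
  have C_cases: "\<And>c. c \<in> C \<Longrightarrow> \<exists>a\<in>A. \<exists>b\<in>B. c = a \<otimes> b" by (simp add: C_def mem_set_mult)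
  obtain a00 where a00: "a00 \<in> A" using nA by blast
  obtain b00 where b00: "b00 \<in> B" using nB by blast
  have a00c: "a00 \<in> carrier G" and b00c: "b00 \<in> carrier G" using a00 b00 sA sB by auto
  have nC: "C \<noteq> {}" using mC[OF a00 b00] by blast
  have Hsub: "subgroup H G" unfolding H_def by (rule stab_subgroup[OF fC sC])
  have fH: "finite H" unfolding H_def using stab_finite[OF fC sC mC[OF a00 b00]] .
  have oneH: "\<one> \<in> H" unfolding H_def using one_stab[OF sC] .
  have Hc: "H \<subseteq> carrier G" by (auto simp: H_def stab_def)
  have Hstab: "\<And>h c. h \<in> H \<Longrightarrow> c \<in> C \<Longrightarrow> h \<otimes> c \<in> C" by (simp add: H_def stab_def)
  have cHpos: "1 \<le> card H" using oneH fH by (metis One_nat_def Suc_leI card_gt_0_iff empty_iff)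
  have cardA_C: "card A \<le> card C" unfolding C_def by (rule card_le_set_mult1[OF fA fB b00 sA sB])
  have cardB_C: "card B \<le> card C" unfolding C_def by (rule card_le_set_mult2[OF fA fB a00 sA sB])
  have negI: "card C + card H < card (A <#> H) + card (B <#> H)"
    using neg by (simp add: kineq_def C_def H_def)

  define A1 where "A1 = {x \<in> carrier G. \<forall>b\<in>B. x \<otimes> b \<in> C}"
  have A_A1: "A \<subseteq> A1" using sA mC by (auto simp: A1_def)
  have sA1: "A1 \<subseteq> carrier G" by (auto simp: A1_def)
  have fA1: "finite A1"
  proof -
    have "A1 \<subseteq> (\<lambda>c. c \<otimes> inv b00) ` C"
    proof
      fix x assume x: "x \<in> A1"
      then have "x \<otimes> b00 \<in> C" "x \<in> carrier G" using b00 by (auto simp: A1_def)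
      moreover have "x = (x \<otimes> b00) \<otimes> inv b00" using \<open>x \<in> carrier G\<close> b00c by (simp add: m_assoc)
      ultimately show "x \<in> (\<lambda>c. c \<otimes> inv b00) ` C" by blast
    qed
    then show ?thesis using fC finite_subset by blast
  qed
  have A1B: "A1 <#> B = C"
  proof
    show "A1 <#> B \<subseteq> C" by (auto simp: A1_def mem_set_mult)
    show "C \<subseteq> A1 <#> B" unfolding C_def by (rule set_mult_mono1[OF A_A1])
  qed
  have A1_eq: "A1 = A"
  proof (rule ccontr)
    assume ne: "A1 \<noteq> A"
    have lt: "card A < card A1" by (rule psubset_card_mono[OF fA1]) (use A_A1 ne in blast)
    have "kineq G A1 B"
      by (rule IH) (use fA1 A_A1 nA sA1 fB nB sB lt A1B in \<open>auto simp: C_def\<close>)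
    then have "card (A1 <#> H) + card (B <#> H) \<le> card C + card H"
      by (simp add: kineq_def A1B H_def)
    moreover have "card (A <#> H) \<le> card (A1 <#> H)"
      by (rule card_mono[OF finite_set_mult[OF fA1 fH] set_mult_mono1[OF A_A1]])
    ultimately show False using negI by linarith
  qed
  define B1 where "B1 = {y \<in> carrier G. \<forall>a\<in>A. a \<otimes> y \<in> C}"
  have B_B1: "B \<subseteq> B1" using sB mC by (auto simp: B1_def)
  have sB1: "B1 \<subseteq> carrier G" by (auto simp: B1_def)
  have fB1: "finite B1"
  proof -
    have "B1 \<subseteq> (\<lambda>c. inv a00 \<otimes> c) ` C"
    proof
      fix y assume y: "y \<in> B1"
      then have "a00 \<otimes> y \<in> C" "y \<in> carrier G" using a00 by (auto simp: B1_def)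
      moreover have "y = inv a00 \<otimes> (a00 \<otimes> y)" using \<open>y \<in> carrier G\<close> a00c by (simp add: inv_cancel_l)
      ultimately show "y \<in> (\<lambda>c. inv a00 \<otimes> c) ` C" by blast
    qed
    then show ?thesis using fC finite_subset by blast
  qed
  have AB1: "A <#> B1 = C"
  proof
    show "A <#> B1 \<subseteq> C" by (auto simp: B1_def mem_set_mult)
    show "C \<subseteq> A <#> B1" unfolding C_def using B_B1 unfolding mem_set_mult set_mult_def by blast
  qed
  have B1_eq: "B1 = B"
  proof (rule ccontr)
    assume ne: "B1 \<noteq> B"
    have lt: "card B < card B1" by (rule psubset_card_mono[OF fB1]) (use B_B1 ne in blast)
    have "kineq G A B1"
      by (rule IH) (use fB1 B_B1 nB sB1 fA nA sA lt AB1 in \<open>auto simp: C_def\<close>)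
    then have "card (A <#> H) + card (B1 <#> H) \<le> card C + card H"
      by (simp add: kineq_def AB1 H_def)
    moreover have "card (B <#> H) \<le> card (B1 <#> H)"
      by (rule card_mono[OF finite_set_mult[OF fB1 fH] set_mult_mono1[OF B_B1]])
    ultimately show False using negI by linarith
  qed
  have cA: "\<And>x. x \<in> carrier G \<Longrightarrow> (\<And>b. b \<in> B \<Longrightarrow> x \<otimes> b \<in> C) \<Longrightarrow> x \<in> A"
    using A1_eq unfolding A1_def by blast
  have cB: "\<And>y. y \<in> carrier G \<Longrightarrow> (\<And>a. a \<in> A \<Longrightarrow> a \<otimes> y \<in> C) \<Longrightarrow> y \<in> B"
    using B1_eq unfolding B1_def by blast
  have perA: "\<And>a h. a \<in> A \<Longrightarrow> h \<in> H \<Longrightarrow> a \<otimes> h \<in> A"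
  proof -
    fix a h assume a: "a \<in> A" and h: "h \<in> H"
    have ac: "a \<in> carrier G" and hc: "h \<in> carrier G" using a h sA Hc by auto
    show "a \<otimes> h \<in> A"
    proof (rule cA)
      show "a \<otimes> h \<in> carrier G" using ac hc by simp
      fix b assume b: "b \<in> B"
      then have bc: "b \<in> carrier G" using sB by auto
      have "a \<otimes> h \<otimes> b = h \<otimes> (a \<otimes> b)" using ac hc bc by (simp add: m_ac)
      then show "a \<otimes> h \<otimes> b \<in> C" using Hstab[OF h mC[OF a b]] by simp
    qed
  qed
  have perB: "\<And>b h. b \<in> B \<Longrightarrow> h \<in> H \<Longrightarrow> b \<otimes> h \<in> B"
  proof -
    fix b h assume b: "b \<in> B" and h: "h \<in> H"
    have bc: "b \<in> carrier G" and hc: "h \<in> carrier G" using b h sB Hc by auto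
    show "b \<otimes> h \<in> B"
    proof (rule cB)
      show "b \<otimes> h \<in> carrier G" using bc hc by simp
      fix a assume a: "a \<in> A"
      then have ac: "a \<in> carrier G" using sA by auto
      have "a \<otimes> (b \<otimes> h) = h \<otimes> (a \<otimes> b)" using ac hc bc by (simp add: m_ac)
      then show "a \<otimes> (b \<otimes> h) \<in> C" using Hstab[OF h mC[OF a b]] by simp
    qed
  qed
  have AH: "A <#> H = A" by (rule periodic_set_mult[OF sA oneH perA])
  have BH: "B <#> H = B" by (rule periodic_set_mult[OF sB oneH perB])
  have big: "card C + card H < card A + card B" using negI AH BH by simp
  define Be where "Be e = {b \<in> B. e \<otimes> b \<in> A}" for e
  define proper where "proper e \<longleftrightarrow> e \<in> carrier G \<and> Be e \<noteq> {} \<and> Be e \<noteq> B" for e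
  have Be_sub: "\<And>e. Be e \<subseteq> B" by (auto simp: Be_def)
  have ex_proper: "\<exists>e. proper e"
  proof (rule ccontr)
    assume np: "\<not> (\<exists>e. proper e)"
    have Bimg: "(\<lambda>b. b \<otimes> inv b00) ` B \<subseteq> H"
    proof
      fix g assume "g \<in> (\<lambda>b. b \<otimes> inv b00) ` B"
      then obtain b where b: "b \<in> B" "g = b \<otimes> inv b00" by blast
      have bc: "b \<in> carrier G" using b sB by auto
      have gc: "g \<in> carrier G" using b bc b00c by simp
      have "\<forall>c\<in>C. g \<otimes> c \<in> C"
      proof
        fix c assume "c \<in> C"
        then obtain a b' where a: "a \<in> A" and b': "b' \<in> B" and c: "c = a \<otimes> b'" using C_cases by blast
        have ac: "a \<in> carrier G" and b'c: "b' \<in> carrier G" using a b' sA sB by auto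
        define e where "e = a \<otimes> inv b00"
        have ec: "e \<in> carrier G" using ac b00c by (simp add: e_def)
        have "e \<otimes> b00 = a" using ac b00c by (simp add: e_def m_assoc)
        then have "b00 \<in> Be e" using a b00 by (simp add: Be_def)
        then have "Be e = B" using np ec by (auto simp: proper_def)
        then have eb: "e \<otimes> b \<in> A" using b by (auto simp: Be_def)
        have "g \<otimes> c = (e \<otimes> b) \<otimes> b'" using ac bc b'c b00c by (simp add: b c e_def m_ac)
        then show "g \<otimes> c \<in> C" using mC[OF eb b'] by simp
      qed
      then show "g \<in> H" using gc by (simp add: H_def stab_def)
    qed
    have "card B = card ((\<lambda>b. b \<otimes> inv b00) ` B)" using sB b00c by (simp add: card_rmult)
    also have "\<dots> \<le> card H" by (rule card_mono[OF fH Bimg])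
    finally show False using big cardA_C by linarith
  qed
  obtain e where pe: "proper e" and emax: "\<And>e'. proper e' \<Longrightarrow> card (Be e') \<le> card (Be e)"
  proof -
    obtain e0 where "proper e0" using ex_proper by blast
    have "\<exists>n. (\<exists>e. proper e \<and> card (Be e) = n) \<and> (\<forall>m. (\<exists>e. proper e \<and> card (Be e) = m) \<longrightarrow> m \<le> n)"
    proof (rule Nat.ex_has_greatest_nat[where b = "card B"])
      show "\<exists>e. proper e \<and> card (Be e) = card (Be e0)" using \<open>proper e0\<close> by blast
      show "\<forall>y. (\<exists>e. proper e \<and> card (Be e) = y) \<longrightarrow> y \<le> card B"
        using Be_sub fB by (auto intro: card_mono)
    qed
    then show ?thesis using that by blast
  qed
  have ec: "e \<in> carrier G" and Bee_ne: "Be e \<noteq> {}" and Bee_neq: "Be e \<noteq> B"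
    using pe by (auto simp: proper_def)
  define B2 where "B2 = B - Be e"
  define Ae where "Ae = A \<union> (\<lambda>b. e \<otimes> b) ` B"
  have eB2: "\<And>b. b \<in> B2 \<Longrightarrow> e \<otimes> b \<notin> A" by (auto simp: B2_def Be_def)
  have eBe: "\<And>b. b \<in> Be e \<Longrightarrow> e \<otimes> b \<in> A" by (auto simp: Be_def)
  have sB2: "B2 \<subseteq> carrier G" using sB by (auto simp: B2_def)
  have fB2: "finite B2" using fB by (auto simp: B2_def)
  have sBe: "Be e \<subseteq> carrier G" using sB Be_sub by blast
  have fBe: "finite (Be e)" using fB Be_sub finite_subset by blast
  have Ae_alt: "Ae = A \<union> (\<lambda>b. e \<otimes> b) ` B2"
    using eBe by (auto simp: Ae_def B2_def)
  have disj: "A \<inter> (\<lambda>b. e \<otimes> b) ` B2 = {}" using eB2 by blast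
  have card_Ae: "card Ae = card A + card B2"
    unfolding Ae_alt using disj fA fB2 ec sB2
    by (simp add: card_Un_disjoint card_lmult)
  have card_Bsplit: "card B = card (Be e) + card B2"
  proof -
    have "B = Be e \<union> B2" using Be_sub by (auto simp: B2_def)
    moreover have "Be e \<inter> B2 = {}" by (auto simp: B2_def)
    ultimately show ?thesis using fBe fB2 by (simp add: card_Un_disjoint)
  qed
  have sAe: "Ae \<subseteq> carrier G" using sA ec sB by (auto simp: Ae_def)
  have fAe: "finite Ae" using fA fB by (simp add: Ae_def)
  have nAe: "Ae \<noteq> {}" using nA by (simp add: Ae_def)
  have A_Ae: "A \<subseteq> Ae" by (simp add: Ae_def)
  define Ce where "Ce = Ae <#> Be e"
  have mCe: "\<And>y b. y \<in> Ae \<Longrightarrow> b \<in> Be e \<Longrightarrow> y \<otimes> b \<in> Ce" by (auto simp: Ce_def mem_set_mult)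
  have Ce_sub: "Ce \<subseteq> C"
  proof
    fix x assume "x \<in> Ce"
    then obtain y b' where y: "y \<in> Ae" and b': "b' \<in> Be e" and x: "x = y \<otimes> b'"
      by (auto simp: Ce_def mem_set_mult)
    show "x \<in> C"
    proof (cases "y \<in> A")
      case True
      then show ?thesis using mC b' Be_sub x by blast
    next
      case False
      then obtain b where b: "b \<in> B" "y = e \<otimes> b" using y by (auto simp: Ae_def)
      have bc: "b \<in> carrier G" and b'c: "b' \<in> carrier G" using b b' sB Be_sub by auto
      have "x = (e \<otimes> b') \<otimes> b" using x b bc b'c ec by (simp add: m_ac)
      then show ?thesis using mC[OF eBe[OF b'] b(1)] by simp
    qed
  qed
  have fCe: "finite Ce" using fC Ce_sub finite_subset by blast
  have sCe: "Ce \<subseteq> carrier G" using Ce_sub sC by blast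
  have Be_psub: "card (Be e) < card B"
    by (rule psubset_card_mono[OF fB]) (use Be_sub Bee_neq in blast)
  have Ce_ne_C: "Ce \<noteq> C"
  proof
    assume eq: "Ce = C"
    have "kineq G Ae (Be e)"
      by (rule IH) (use fAe nAe sAe fBe Bee_ne sBe eq Be_psub card_Ae card_Bsplit in \<open>auto simp: Ce_def C_def\<close>)
    then have le: "card (Ae <#> H) + card (Be e <#> H) \<le> card C + card H"
      using eq by (simp add: kineq_def Ce_def H_def)
    have "Ae <#> H = Ae"
    proof (rule periodic_set_mult[OF sAe oneH])
      fix y h assume y: "y \<in> Ae" and h: "h \<in> H"
      show "y \<otimes> h \<in> Ae"
      proof (cases "y \<in> A")
        case True then show ?thesis using perA h by (simp add: Ae_def)
      next
        case False
        then obtain b where b: "b \<in> B" "y = e \<otimes> b" using y by (auto simp: Ae_def)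
        have "b \<in> carrier G" "h \<in> carrier G" using b sB Hc h by auto
        then have "y \<otimes> h = e \<otimes> (b \<otimes> h)" using b ec by (simp add: m_assoc)
        then show ?thesis using perB[OF b(1) h] by (simp add: Ae_def)
      qed
    qed
    moreover have "Be e <#> H = Be e"
    proof (rule periodic_set_mult[OF sBe oneH])
      fix b h assume b: "b \<in> Be e" and h: "h \<in> H"
      have bB: "b \<in> B" using b Be_sub by blast
      have "b \<in> carrier G" "h \<in> carrier G" using bB sB Hc h by auto
      then have "e \<otimes> (b \<otimes> h) = (e \<otimes> b) \<otimes> h" using ec by (simp add: m_assoc)
      then show "b \<otimes> h \<in> Be e" using perB[OF bB h] perA[OF eBe[OF b] h] by (simp add: Be_def)
    qed
    ultimately show False using le big card_Ae card_Bsplit by simp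
  qed
  have cCe_lt: "card Ce < card C"
    by (rule psubset_card_mono[OF fC]) (use Ce_sub Ce_ne_C in blast)
  define K where "K = stab G Ce"
  obtain y0 b0e where y0: "y0 \<in> A" and b0e: "b0e \<in> Be e" using nA Bee_ne by blast
  have Ksub: "subgroup K G" unfolding K_def by (rule stab_subgroup[OF fCe sCe])
  have fK: "finite K" unfolding K_def
    using stab_finite[OF fCe sCe mCe[OF A_Ae[THEN subsetD, OF y0] b0e]] .
  have oneK: "\<one> \<in> K" unfolding K_def using one_stab[OF sCe] .
  have Kc: "K \<subseteq> carrier G" by (auto simp: K_def stab_def)
  have Kstab: "\<And>k c. k \<in> K \<Longrightarrow> c \<in> Ce \<Longrightarrow> k \<otimes> c \<in> Ce" by (simp add: K_def stab_def)
  have Be_perK: "\<And>b k. b \<in> Be e \<Longrightarrow> k \<in> K \<Longrightarrow> b \<otimes> k \<in> Be e"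
  proof -
    fix b k assume b: "b \<in> Be e" and k: "k \<in> K"
    have bc: "b \<in> carrier G" and kc: "k \<in> carrier G" using b k sBe Kc by auto
    have bkB: "b \<otimes> k \<in> B"
    proof (rule cB)
      show "b \<otimes> k \<in> carrier G" using bc kc by simp
      fix a assume a: "a \<in> A"
      then have ac: "a \<in> carrier G" using sA by auto
      have "a \<otimes> (b \<otimes> k) = k \<otimes> (a \<otimes> b)" using ac bc kc by (simp add: m_ac)
      moreover have "k \<otimes> (a \<otimes> b) \<in> Ce" using Kstab[OF k mCe[OF A_Ae[THEN subsetD, OF a] b]] .
      ultimately show "a \<otimes> (b \<otimes> k) \<in> C" using Ce_sub by auto
    qed
    have "e \<otimes> (b \<otimes> k) \<in> A"
    proof (rule cA)
      show "e \<otimes> (b \<otimes> k) \<in> carrier G" using bc kc ec by simp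
      fix b'' assume b'': "b'' \<in> B"
      then have b''c: "b'' \<in> carrier G" using sB by auto
      have "e \<otimes> (b \<otimes> k) \<otimes> b'' = k \<otimes> ((e \<otimes> b'') \<otimes> b)" using bc kc ec b''c by (simp add: m_ac)
      moreover have "e \<otimes> b'' \<in> Ae" using b'' by (simp add: Ae_def)
      then have "k \<otimes> ((e \<otimes> b'') \<otimes> b) \<in> Ce" using Kstab[OF k mCe[OF _ b]] by blast
      ultimately show "e \<otimes> (b \<otimes> k) \<otimes> b'' \<in> C" using Ce_sub by auto
    qed
    then show "b \<otimes> k \<in> Be e" using bkB by (simp add: Be_def)
  qed
  define As where "As = {x \<in> carrier G. \<forall>b\<in>Be e. x \<otimes> b \<in> Ce}"
  have Ae_As: "Ae \<subseteq> As" using sAe mCe by (auto simp: As_def)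
  have A_As: "A \<subseteq> As" using Ae_As A_Ae by blast
  have sAs: "As \<subseteq> carrier G" by (auto simp: As_def)
  have nAs: "As \<noteq> {}" using A_As nA by blast
  have As_perK: "\<And>x k. x \<in> As \<Longrightarrow> k \<in> K \<Longrightarrow> x \<otimes> k \<in> As"
  proof -
    fix x k assume x: "x \<in> As" and k: "k \<in> K"
    have xc: "x \<in> carrier G" and kc: "k \<in> carrier G" using x k sAs Kc by auto
    have "\<forall>b\<in>Be e. x \<otimes> k \<otimes> b \<in> Ce"
    proof
      fix b assume b: "b \<in> Be e"
      then have bc: "b \<in> carrier G" using sBe by auto
      have "x \<otimes> k \<otimes> b = k \<otimes> (x \<otimes> b)" using xc kc bc by (simp add: m_ac)
      then show "x \<otimes> k \<otimes> b \<in> Ce" using Kstab[OF k] x b by (simp add: As_def)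
    qed
    then show "x \<otimes> k \<in> As" using xc kc by (simp add: As_def)
  qed
  have b0ec: "b0e \<in> carrier G" using b0e sBe by auto
  have fAs: "finite As"
  proof -
    have "As \<subseteq> (\<lambda>c. c \<otimes> inv b0e) ` Ce"
    proof
      fix x assume x: "x \<in> As"
      then have "x \<otimes> b0e \<in> Ce" "x \<in> carrier G" using b0e by (auto simp: As_def)
      moreover have "x = (x \<otimes> b0e) \<otimes> inv b0e" using \<open>x \<in> carrier G\<close> b0ec by (simp add: m_assoc)
      ultimately show "x \<in> (\<lambda>c. c \<otimes> inv b0e) ` Ce" by blast
    qed
    then show ?thesis using fCe finite_subset by blast
  qed
  have AsBe: "As <#> Be e = Ce"
  proof
    show "As <#> Be e \<subseteq> Ce" by (auto simp: As_def mem_set_mult)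
    show "Ce \<subseteq> As <#> Be e" unfolding Ce_def by (rule set_mult_mono1[OF Ae_As])
  qed
  have "kineq G As (Be e)"
    by (rule IH) (use fAs nAs sAs fBe Bee_ne sBe AsBe cCe_lt in \<open>auto simp: C_def\<close>)
  then have leK: "card (As <#> K) + card (Be e <#> K) \<le> card Ce + card K"
    by (simp add: kineq_def AsBe K_def)
  have "As <#> K = As" by (rule periodic_set_mult[OF sAs oneK As_perK])
  moreover have "Be e <#> K = Be e" by (rule periodic_set_mult[OF sBe oneK Be_perK])
  ultimately have keyAs: "card As + card (Be e) \<le> card Ce + card K" using leK by simp
  have Be_shift: "\<And>k. k \<in> K \<Longrightarrow> Be (e \<otimes> k) = Be e \<or> Be (e \<otimes> k) = B"
  proof -
    fix k assume k: "k \<in> K"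
    have kc: "k \<in> carrier G" using k Kc by auto
    have sub: "Be e \<subseteq> Be (e \<otimes> k)"
    proof
      fix b assume b: "b \<in> Be e"
      have bc: "b \<in> carrier G" using b sBe by auto
      have "e \<otimes> k \<otimes> b = e \<otimes> (b \<otimes> k)" using ec kc bc by (simp add: m_ac)
      then show "b \<in> Be (e \<otimes> k)" using eBe[OF Be_perK[OF b k]] b Be_sub by (auto simp: Be_def)
    qed
    show "Be (e \<otimes> k) = Be e \<or> Be (e \<otimes> k) = B"
    proof (cases "Be (e \<otimes> k) = B")
      case False
      then have "proper (e \<otimes> k)" using sub Bee_ne ec kc by (auto simp: proper_def)
      then have "card (Be (e \<otimes> k)) \<le> card (Be e)" by (rule emax)
      then have "Be e = Be (e \<otimes> k)"
        by (intro card_seteq[OF _ sub]) (use fB Be_sub finite_subset in blast)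
      then show ?thesis by simp
    qed simp
  qed
  define E2 where "E2 = {k \<in> K. Be (e \<otimes> k) = B}"
  have E1: "\<And>k. k \<in> K \<Longrightarrow> k \<notin> E2 \<Longrightarrow> Be (e \<otimes> k) = Be e" using Be_shift by (auto simp: E2_def)
  have E2K: "E2 \<subseteq> K" by (auto simp: E2_def)
  have E2A: "\<And>k b. k \<in> E2 \<Longrightarrow> b \<in> B \<Longrightarrow> e \<otimes> k \<otimes> b \<in> A" by (auto simp: E2_def Be_def)
  define W where "W x = (\<lambda>k. x \<otimes> k) ` K" for x
  have W_eq: "\<And>x y. x \<in> carrier G \<Longrightarrow> y \<in> W x \<Longrightarrow> W y = W x"
  proof -
    fix x y assume xc: "x \<in> carrier G" and y: "y \<in> W x"
    then obtain k1 where k1: "k1 \<in> K" "y = x \<otimes> k1" by (auto simp: W_def)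
    have k1c: "k1 \<in> carrier G" using k1 Kc by auto
    show "W y = W x"
    proof
      show "W y \<subseteq> W x"
      proof
        fix z assume "z \<in> W y"
        then obtain k where k: "k \<in> K" "z = y \<otimes> k" by (auto simp: W_def)
        have "z = x \<otimes> (k1 \<otimes> k)" using k k1 xc k1c Kc by (auto simp: m_assoc)
        moreover have "k1 \<otimes> k \<in> K" using k k1 Ksub by (simp add: subgroup.m_closed)
        ultimately show "z \<in> W x" by (auto simp: W_def)
      qed
      show "W x \<subseteq> W y"
      proof
        fix z assume "z \<in> W x"
        then obtain k where k: "k \<in> K" "z = x \<otimes> k" by (auto simp: W_def)
        have kc: "k \<in> carrier G" using k Kc by auto
        have "y \<otimes> (inv k1 \<otimes> k) = x \<otimes> k" using k1 xc k1c kc by (simp add: m_assoc inv_cancel_r)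
        then have "z = y \<otimes> (inv k1 \<otimes> k)" using k xc k1c kc by (simp add: inv_cancel_r)
        moreover have "inv k1 \<otimes> k \<in> K" using k k1 Ksub by (simp add: subgroup.m_closed subgroup.m_inv_closed)
        ultimately show "z \<in> W y" by (auto simp: W_def)
      qed
    qed
  qed
  have card_W: "\<And>x. x \<in> carrier G \<Longrightarrow> card (W x) = card K" unfolding W_def using Kc by (simp add: card_lmult)
  have fW: "\<And>x. finite (W x)" unfolding W_def using fK by simp
  have self_W: "\<And>x. x \<in> carrier G \<Longrightarrow> x \<in> W x"
  proof -
    fix x assume "x \<in> carrier G"
    then have "x = x \<otimes> \<one>" by simp
    then show "x \<in> W x" using oneK by (auto simp: W_def)
  qed
  have struc: "\<And>b. b \<in> B2 \<Longrightarrow> A \<inter> W (e \<otimes> b) = (\<lambda>k. e \<otimes> k \<otimes> b) ` E2"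
  proof -
    fix b assume b: "b \<in> B2"
    have bc: "b \<in> carrier G" using b sB2 by auto
    have bB: "b \<in> B" and bnot: "b \<notin> Be e" using b by (auto simp: B2_def)
    show "A \<inter> W (e \<otimes> b) = (\<lambda>k. e \<otimes> k \<otimes> b) ` E2"
    proof
      show "A \<inter> W (e \<otimes> b) \<subseteq> (\<lambda>k. e \<otimes> k \<otimes> b) ` E2"
      proof
        fix x assume x: "x \<in> A \<inter> W (e \<otimes> b)"
        then have xA: "x \<in> A" by blast
        from x obtain k where k: "k \<in> K" and xk: "x = e \<otimes> b \<otimes> k" unfolding W_def by blast
        have kc: "k \<in> carrier G" using k Kc by auto
        have "e \<otimes> b \<otimes> k = e \<otimes> k \<otimes> b" using ec bc kc by (simp add: m_ac)
        then have xeq: "x = e \<otimes> k \<otimes> b" using xk by simp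
        have "k \<in> E2"
        proof (rule ccontr)
          assume "k \<notin> E2"
          then have "Be (e \<otimes> k) = Be e" by (rule E1[OF k])
          moreover have "e \<otimes> k \<otimes> b \<in> A" using xA xeq by simp
          then have "b \<in> Be (e \<otimes> k)" using bB unfolding Be_def by blast
          ultimately show False using bnot by simp
        qed
        then show "x \<in> (\<lambda>k. e \<otimes> k \<otimes> b) ` E2" using xeq by blast
      qed
      show "(\<lambda>k. e \<otimes> k \<otimes> b) ` E2 \<subseteq> A \<inter> W (e \<otimes> b)"
      proof
        fix x assume "x \<in> (\<lambda>k. e \<otimes> k \<otimes> b) ` E2"
        then obtain k where k: "k \<in> E2" and xk: "x = e \<otimes> k \<otimes> b" by blast
        have kK: "k \<in> K" using k E2K by blast
        have kc: "k \<in> carrier G" using kK Kc by auto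
        have "x \<in> A" using E2A[OF k bB] xk by simp
        moreover have "e \<otimes> k \<otimes> b = e \<otimes> b \<otimes> k" using ec bc kc by (simp add: m_ac)
        then have "x \<in> W (e \<otimes> b)" using xk kK unfolding W_def by blast
        ultimately show "x \<in> A \<inter> W (e \<otimes> b)" by blast
      qed
    qed
  qed
  have core: "\<And>a0 b0. a0 \<in> A \<Longrightarrow> b0 \<in> B \<Longrightarrow> a0 \<otimes> b0 \<notin> Ce \<Longrightarrow>
      \<exists>B3. B3 \<subseteq> B2 \<and> card H < card B3 \<and> (\<forall>b\<in>B3. e \<otimes> b \<in> W a0)"
  proof -
    fix a0 b0 assume a0: "a0 \<in> A" and b0: "b0 \<in> B" and bad: "a0 \<otimes> b0 \<notin> Ce"
    have a0c: "a0 \<in> carrier G" and b0c: "b0 \<in> carrier G" using a0 b0 sA sB by auto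
    define X where "X = A \<inter> W a0"
    define B3 where "B3 = {b \<in> B2. e \<otimes> b \<in> W a0}"
    have fX: "finite X" using fA by (simp add: X_def)
    have sX: "X \<subseteq> carrier G" using sA by (auto simp: X_def)
    have X_bad: "(\<lambda>x. x \<otimes> b0) ` X \<subseteq> C - Ce"
    proof
      fix z assume "z \<in> (\<lambda>x. x \<otimes> b0) ` X"
      then obtain x where x: "x \<in> X" and z: "z = x \<otimes> b0" by blast
      have xA: "x \<in> A" using x by (simp add: X_def)
      from x obtain k where k: "k \<in> K" and xk: "x = a0 \<otimes> k" unfolding X_def W_def by blast
      have kc: "k \<in> carrier G" using k Kc by auto
      have zC: "z \<in> C" using mC[OF xA b0] z by simp
      have "z \<notin> Ce"
      proof
        assume "z \<in> Ce"
        then have "inv k \<otimes> z \<in> Ce" using Kstab Ksub k by (simp add: subgroup.m_inv_closed)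
        moreover have "inv k \<otimes> z = (inv k \<otimes> k) \<otimes> (a0 \<otimes> b0)"
          using z xk kc a0c b0c by (simp add: m_ac)
        then have "inv k \<otimes> z = a0 \<otimes> b0" using kc a0c b0c by simp
        ultimately show False using bad by simp
      qed
      then show "z \<in> C - Ce" using zC by blast
    qed
    have cX: "card X + card Ce \<le> card C"
    proof -
      have "card X = card ((\<lambda>x. x \<otimes> b0) ` X)" using sX b0c by (simp add: card_rmult)
      also have "\<dots> \<le> card (C - Ce)" by (rule card_mono[OF _ X_bad]) (use fC in simp)
      also have "\<dots> = card C - card Ce" using Ce_sub fCe by (simp add: card_Diff_subset)
      finally show ?thesis using cCe_lt by linarith
    qed
    have W_As: "W a0 \<subseteq> As"
    proof
      fix w assume "w \<in> W a0"
      then obtain k where "k \<in> K" "w = a0 \<otimes> k" unfolding W_def by blast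
      then show "w \<in> As" using As_perK A_As a0 by blast
    qed
    define P where "P = W a0 - A"
    define Q where "Q = (\<lambda>b. e \<otimes> b) ` B2"
    have fP: "finite P" using fW by (simp add: P_def)
    have fQ: "finite Q" using fB2 by (simp add: Q_def)
    have QA: "Q \<inter> A = {}" using eB2 by (auto simp: Q_def)
    have Q_As: "Q \<subseteq> As" using Ae_As by (auto simp: Q_def Ae_def B2_def)
    have PQ_sub: "P \<union> Q \<subseteq> As - A" using W_As Q_As QA by (auto simp: P_def)
    have c1: "card (P \<union> Q) + card A \<le> card As"
    proof -
      have "card (P \<union> Q) \<le> card (As - A)" by (rule card_mono[OF _ PQ_sub]) (use fAs in simp)
      also have "\<dots> = card As - card A" using A_As fA by (simp add: card_Diff_subset)
      finally show ?thesis using card_mono[OF fAs A_As] by linarith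
    qed
    have c2: "card P + card Q = card (P \<union> Q) + card (P \<inter> Q)" by (rule card_Un_Int[OF fP fQ])
    have c3: "card P + card X = card K"
    proof -
      have "W a0 = P \<union> X" by (auto simp: P_def X_def)
      moreover have "P \<inter> X = {}" by (auto simp: P_def X_def)
      ultimately have "card (W a0) = card P + card X" using fP fX by (simp add: card_Un_disjoint)
      then show ?thesis using card_W[OF a0c] by simp
    qed
    have c4: "card Q = card B2" unfolding Q_def using ec sB2 by (simp add: card_lmult)
    have c5: "P \<inter> Q = (\<lambda>b. e \<otimes> b) ` B3" using QA by (auto simp: P_def Q_def B3_def)
    have sB3: "B3 \<subseteq> carrier G" using sB2 by (auto simp: B3_def)
    have c6: "card B3 = card (P \<inter> Q)" unfolding c5 using ec sB3 by (simp add: card_lmult)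
    have "card H < card B3"
      using c1 c2 c3 c4 c6 cX keyAs card_Bsplit big by linarith
    moreover have "B3 \<subseteq> B2" "\<forall>b\<in>B3. e \<otimes> b \<in> W a0" by (auto simp: B3_def)
    ultimately show "\<exists>B3. B3 \<subseteq> B2 \<and> card H < card B3 \<and> (\<forall>b\<in>B3. e \<otimes> b \<in> W a0)" by blast
  qed
  have badstruc: "\<And>a b'. a \<in> A \<Longrightarrow> b' \<in> B2 \<Longrightarrow> e \<otimes> b' \<in> W a \<Longrightarrow> A \<inter> W a = (\<lambda>k. e \<otimes> k \<otimes> b') ` E2"
  proof -
    fix a b' assume a: "a \<in> A" and b': "b' \<in> B2" and ew: "e \<otimes> b' \<in> W a"
    have ac: "a \<in> carrier G" using a sA by auto
    have "W (e \<otimes> b') = W a" by (rule W_eq[OF ac ew])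
    then show "A \<inter> W a = (\<lambda>k. e \<otimes> k \<otimes> b') ` E2" using struc[OF b'] by simp
  qed
  obtain c where cC: "c \<in> C" and cnot: "c \<notin> Ce" using Ce_sub Ce_ne_C by blast
  obtain a0 b0 where a0: "a0 \<in> A" and b0: "b0 \<in> B" and c: "c = a0 \<otimes> b0" using C_cases[OF cC] by blast
  have a0c: "a0 \<in> carrier G" using a0 sA by auto
  obtain B3 where B3sub: "B3 \<subseteq> B2" and B3card: "card H < card B3" and B3W: "\<forall>b\<in>B3. e \<otimes> b \<in> W a0"
    using core[OF a0 b0] cnot c by blast
  have "B3 \<noteq> {}" using B3card by auto
  then obtain b1 where b1: "b1 \<in> B3" by blast
  have b1B2: "b1 \<in> B2" using b1 B3sub by blast
  have b1c: "b1 \<in> carrier G" using b1B2 sB2 by auto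
  have AW0: "A \<inter> W a0 = (\<lambda>k. e \<otimes> k \<otimes> b1) ` E2" using badstruc[OF a0 b1B2] B3W b1 by blast
  have "a0 \<in> A \<inter> W a0" using a0 self_W[OF a0c] by blast
  then have E2ne: "E2 \<noteq> {}" using AW0 by blast
  define S where "S = {g \<in> carrier G. \<forall>k\<in>E2. k \<otimes> g \<in> E2}"
  have S_K: "S \<subseteq> K"
  proof
    fix g assume g: "g \<in> S"
    obtain k0 where k0: "k0 \<in> E2" using E2ne by blast
    have k0K: "k0 \<in> K" using k0 E2K by blast
    have k0c: "k0 \<in> carrier G" using k0K Kc by auto
    have gc: "g \<in> carrier G" using g by (simp add: S_def)
    have "k0 \<otimes> g \<in> K" using g k0 E2K by (auto simp: S_def)
    then have "inv k0 \<otimes> (k0 \<otimes> g) \<in> K" using k0K Ksub by (simp add: subgroup.m_closed subgroup.m_inv_closed)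
    then show "g \<in> K" using k0c gc by (simp add: inv_cancel_l)
  qed
  have Aper_S: "\<And>a s. a \<in> A \<Longrightarrow> s \<in> S \<Longrightarrow> a \<otimes> s \<in> A"
  proof -
    fix a s assume a: "a \<in> A" and s: "s \<in> S"
    have ac: "a \<in> carrier G" using a sA by auto
    have sc: "s \<in> carrier G" using s by (simp add: S_def)
    have sK: "s \<in> K" using s S_K by blast
    show "a \<otimes> s \<in> A"
    proof (rule cA)
      show "a \<otimes> s \<in> carrier G" using ac sc by simp
      fix b assume b: "b \<in> B"
      have bc: "b \<in> carrier G" using b sB by auto
      show "a \<otimes> s \<otimes> b \<in> C"
      proof (cases "a \<otimes> b \<in> Ce")
        case True
        then have "s \<otimes> (a \<otimes> b) \<in> Ce" using Kstab sK by blast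
        moreover have "a \<otimes> s \<otimes> b = s \<otimes> (a \<otimes> b)" using ac sc bc by (simp add: m_ac)
        ultimately show ?thesis using Ce_sub by auto
      next
        case False
        obtain B3' where B3': "B3' \<subseteq> B2" "card H < card B3'" "\<forall>b\<in>B3'. e \<otimes> b \<in> W a"
          using core[OF a b False] by blast
        have "B3' \<noteq> {}" using B3'(2) by auto
        then obtain b' where b': "b' \<in> B3'" by blast
        have b'B2: "b' \<in> B2" using b' B3'(1) by blast
        have b'c: "b' \<in> carrier G" using b'B2 sB2 by auto
        have AW: "A \<inter> W a = (\<lambda>k. e \<otimes> k \<otimes> b') ` E2" using badstruc[OF a b'B2] B3'(3) b' by blast
        have "a \<in> A \<inter> W a" using a self_W[OF ac] by blast
        then obtain k where k: "k \<in> E2" and ak: "a = e \<otimes> k \<otimes> b'" using AW by blast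
        have kc: "k \<in> carrier G" using k E2K Kc by auto
        have ks: "k \<otimes> s \<in> E2" using s k by (simp add: S_def)
        have "e \<otimes> (k \<otimes> s) \<otimes> b' \<in> A" using E2A[OF ks] b'B2 by (simp add: B2_def)
        moreover have "e \<otimes> (k \<otimes> s) \<otimes> b' = a \<otimes> s" using ak ec kc sc b'c by (simp add: m_ac)
        ultimately have "a \<otimes> s \<in> A" by simp
        then show ?thesis using mC b by blast
      qed
    qed
  qed
  have S_H: "S \<subseteq> H"
  proof
    fix s assume s: "s \<in> S"
    have sc: "s \<in> carrier G" using s by (simp add: S_def)
    have "\<forall>c\<in>C. s \<otimes> c \<in> C"
    proof
      fix c assume "c \<in> C"
      then obtain a b where a: "a \<in> A" and b: "b \<in> B" and c: "c = a \<otimes> b" using C_cases by blast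
      have ac: "a \<in> carrier G" and bc: "b \<in> carrier G" using a b sA sB by auto
      have "s \<otimes> c = (a \<otimes> s) \<otimes> b" using c ac bc sc by (simp add: m_ac)
      then show "s \<otimes> c \<in> C" using mC[OF Aper_S[OF a s] b] by simp
    qed
    then show "s \<in> H" using sc by (simp add: H_def stab_def)
  qed
  have img: "(\<lambda>b. b \<otimes> inv b1) ` B3 \<subseteq> S"
  proof
    fix g assume "g \<in> (\<lambda>b. b \<otimes> inv b1) ` B3"
    then obtain b where b: "b \<in> B3" and g: "g = b \<otimes> inv b1" by blast
    have bB2: "b \<in> B2" using b B3sub by blast
    have bc: "b \<in> carrier G" using bB2 sB2 by auto
    have gc: "g \<in> carrier G" using g bc b1c by simp
    have AWb: "A \<inter> W a0 = (\<lambda>k. e \<otimes> k \<otimes> b) ` E2" using badstruc[OF a0 bB2] B3W b by blast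
    have "\<forall>k\<in>E2. k \<otimes> g \<in> E2"
    proof
      fix k assume k: "k \<in> E2"
      have kc: "k \<in> carrier G" using k E2K Kc by auto
      have "e \<otimes> k \<otimes> b \<in> A \<inter> W a0" using AWb k by blast
      then obtain k' where k': "k' \<in> E2" and eq: "e \<otimes> k \<otimes> b = e \<otimes> k' \<otimes> b1" using AW0 by blast
      have k'c: "k' \<in> carrier G" using k' E2K Kc by auto
      have "k \<otimes> g = inv e \<otimes> (e \<otimes> k \<otimes> b) \<otimes> inv b1"
      proof -
        have "inv e \<otimes> (e \<otimes> k \<otimes> b) = k \<otimes> b" using ec kc bc by (simp add: m_assoc inv_cancel_l)
        then show ?thesis using ec kc bc b1c g by (simp add: m_assoc)
      qed
      also have "\<dots> = inv e \<otimes> (e \<otimes> k' \<otimes> b1) \<otimes> inv b1" using eq by simp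
      also have "\<dots> = k'"
      proof -
        have "inv e \<otimes> (e \<otimes> k' \<otimes> b1) = k' \<otimes> b1" using ec k'c b1c by (simp add: m_assoc inv_cancel_l)
        then show ?thesis using ec k'c b1c by (simp add: m_assoc)
      qed
      finally show "k \<otimes> g \<in> E2" using k' by simp
    qed
    then show "g \<in> S" using gc by (simp add: S_def)
  qed
  have sB3: "B3 \<subseteq> carrier G" using B3sub sB2 by blast
  have "card B3 = card ((\<lambda>b. b \<otimes> inv b1) ` B3)" using sB3 b1c by (simp add: card_rmult)
  also have "\<dots> \<le> card H" using img S_H fH by (meson card_mono order_trans)
  finally show False using B3card by linarith
qed


end

context comm_group begin


lemma kneser:
  assumes "finite A" "A \<noteq> {}" "A \<subseteq> carrier G" "finite B" "B \<noteq> {}" "B \<subseteq> carrier G"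
  shows "kineq G A B"
proof -
  let ?fs = "[\<lambda>(A::'a set, B::'a set). card (A <#> B),
              \<lambda>(A, B). 2 * card (A <#> B) - (card A + card B),
              \<lambda>(A, B). card B]"
  have bnd: "\<And>A B. finite A \<Longrightarrow> A \<noteq> {} \<Longrightarrow> A \<subseteq> carrier G \<Longrightarrow> finite B \<Longrightarrow> B \<noteq> {} \<Longrightarrow> B \<subseteq> carrier G \<Longrightarrow>
      card A \<le> card (A <#> B) \<and> card B \<le> card (A <#> B)"
  proof -
    fix A B assume h: "finite A" "A \<noteq> {}" "A \<subseteq> carrier G" "finite B" "B \<noteq> {}" "B \<subseteq> carrier G"
    obtain a b where "a \<in> A" "b \<in> B" using h by blast
    then show "card A \<le> card (A <#> B) \<and> card B \<le> card (A <#> B)"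
      using card_le_set_mult1[OF h(1,4) \<open>b \<in> B\<close> h(3,6)] card_le_set_mult2[OF h(1,4) \<open>a \<in> A\<close> h(3,6)] by simp
  qed
  have main: "\<forall>A B. p = (A, B) \<longrightarrow> finite A \<longrightarrow> A \<noteq> {} \<longrightarrow> A \<subseteq> carrier G \<longrightarrow> finite B \<longrightarrow> B \<noteq> {} \<longrightarrow> B \<subseteq> carrier G \<longrightarrow> kineq G A B" for p
  proof (induction p rule: wf_induct_rule[OF wf_measures[of ?fs]])
    case (1 p)
    show ?case
    proof (intro allI impI)
      fix A B assume p: "p = (A, B)" and h: "finite A" "A \<noteq> {}" "A \<subseteq> carrier G" "finite B" "B \<noteq> {}" "B \<subseteq> carrier G"
      show "kineq G A B"
      proof (rule kneser_step[OF h])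
        fix A' B' assume h': "finite A'" "A' \<noteq> {}" "A' \<subseteq> carrier G" "finite B'" "B' \<noteq> {}" "B' \<subseteq> carrier G"
          and lex: "card (A' <#> B') < card (A <#> B) \<or>
           (card (A' <#> B') = card (A <#> B) \<and> (card A + card B < card A' + card B' \<or>
            (card A' + card B' = card A + card B \<and> card B' < card B)))"
        have b1: "card A' \<le> card (A' <#> B') \<and> card B' \<le> card (A' <#> B')" using bnd[OF h'] .
        have b2: "card A \<le> card (A <#> B) \<and> card B \<le> card (A <#> B)" using bnd[OF h] .
        have "((A', B'), p) \<in> measures ?fs" using lex b1 b2 p by auto
        then show "kineq G A' B'" using 1 h' by blast
      qed
    qed
  qed
  show ?thesis using main[of "(A, B)"] assms by blast
qed


end

theorem proposition2p3:
  fixes G (structure) and A B :: "'a set"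
  assumes "comm_group G"
    and "A \<subseteq> carrier G" and "finite A" and "A \<noteq> {}"
    and "B \<subseteq> carrier G" and "finite B" and "B \<noteq> {}"
    and "\<And>H a b. \<lbrakk> subgroup H G; finite H; H \<noteq> {\<one>}; a \<in> carrier G; b \<in> carrier G \<rbrakk>
           \<Longrightarrow> card ((a <# H) \<inter> A) + card ((b <# H) \<inter> B) \<le> card H + 1"
  shows "\<forall>S T. S \<subseteq> A \<and> S \<noteq> {} \<and> T \<subseteq> B \<and> T \<noteq> {} \<longrightarrow>
           int (card (S <#> T)) \<ge> int (card S) + int (card T) - 1"
proof (intro allI impI)
  fix S T assume h: "S \<subseteq> A \<and> S \<noteq> {} \<and> T \<subseteq> B \<and> T \<noteq> {}"
  interpret comm_group G by (rule assms(1))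
  have SA: "S \<subseteq> A" and nS: "S \<noteq> {}" and TB: "T \<subseteq> B" and nT: "T \<noteq> {}" using h by auto
  have fS: "finite S" using SA assms(3) finite_subset by blast
  have fT: "finite T" using TB assms(6) finite_subset by blast
  have sS: "S \<subseteq> carrier G" using SA assms(2) by blast
  have sT: "T \<subseteq> carrier G" using TB assms(5) by blast
  define C where "C = S <#> T"
  define H where "H = stab G C"
  have fC: "finite C" using fS fT by (simp add: C_def finite_set_mult)
  have sC: "C \<subseteq> carrier G" using sS sT by (simp add: C_def set_mult_sub)
  obtain a where a: "a \<in> S" using nS by blast
  obtain b where b: "b \<in> T" using nT by blast
  have ac: "a \<in> carrier G" and bc: "b \<in> carrier G" using a b sS sT by auto
  have abC: "a \<otimes> b \<in> C" using a b by (auto simp: C_def mem_set_mult)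
  have Hsub: "subgroup H G" unfolding H_def by (rule stab_subgroup[OF fC sC])
  have fH: "finite H" unfolding H_def using stab_finite[OF fC sC abC] .
  have oneH: "\<one> \<in> H" unfolding H_def using one_stab[OF sC] .
  have Hc: "H \<subseteq> carrier G" by (auto simp: H_def stab_def)
  have kin: "card (S <#> H) + card (T <#> H) \<le> card C + card H"
    using kneser[OF fS nS sS fT nT sT] by (simp add: kineq_def C_def H_def)
  have fSH: "finite (S <#> H)" using fS fH by (simp add: finite_set_mult)
  have fTH: "finite (T <#> H)" using fT fH by (simp add: finite_set_mult)
  have S_SH: "S \<subseteq> S <#> H"
  proof
    fix x assume "x \<in> S"
    then have "x = x \<otimes> \<one>" "x \<in> S" using sS by auto
    then show "x \<in> S <#> H" using oneH unfolding mem_set_mult by blast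
  qed
  have T_TH: "T \<subseteq> T <#> H"
  proof
    fix x assume "x \<in> T"
    then have "x = x \<otimes> \<one>" "x \<in> T" using sT by auto
    then show "x \<in> T <#> H" using oneH unfolding mem_set_mult by blast
  qed
  show "int (card (S <#> T)) \<ge> int (card S) + int (card T) - 1"
  proof (rule ccontr)
    assume "\<not> ?thesis"
    then have lt: "card C + 2 \<le> card S + card T" unfolding C_def by linarith
    show False
    proof (cases "H = {\<one>}")
      case True
      have "S <#> H = S" using True sS by (intro periodic_set_mult) auto
      moreover have "T <#> H = T" using True sT by (intro periodic_set_mult) auto
      ultimately show False using kin lt True by simp
    next
      case False
      have hyp: "card ((a <# H) \<inter> A) + card ((b <# H) \<inter> B) \<le> card H + 1"
        by (rule assms(8)[OF Hsub fH False ac bc])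
      have cS: "card H + card S \<le> card ((a <# H) \<inter> S) + card (S <#> H)"
      proof -
        have aHsub: "a <# H \<subseteq> ((a <# H) \<inter> S) \<union> ((S <#> H) - S)"
        proof
          fix x assume x: "x \<in> a <# H"
          then obtain h where "h \<in> H" "x = a \<otimes> h" unfolding l_coset_img by blast
          then have "x \<in> S <#> H" using a unfolding mem_set_mult by blast
          then show "x \<in> ((a <# H) \<inter> S) \<union> ((S <#> H) - S)" using x by blast
        qed
        have "card H = card (a <# H)" unfolding l_coset_img using ac Hc by (simp add: card_lmult)
        also have "\<dots> \<le> card (((a <# H) \<inter> S) \<union> ((S <#> H) - S))"
          by (rule card_mono[OF _ aHsub]) (use fS fSH in simp)
        also have "\<dots> \<le> card ((a <# H) \<inter> S) + card ((S <#> H) - S)" by (rule card_Un_le)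
        also have "card ((S <#> H) - S) = card (S <#> H) - card S" using S_SH fS by (simp add: card_Diff_subset)
        finally show ?thesis using card_mono[OF fSH S_SH] by linarith
      qed
      have cT: "card H + card T \<le> card ((b <# H) \<inter> T) + card (T <#> H)"
      proof -
        have bHsub: "b <# H \<subseteq> ((b <# H) \<inter> T) \<union> ((T <#> H) - T)"
        proof
          fix x assume x: "x \<in> b <# H"
          then obtain h where "h \<in> H" "x = b \<otimes> h" unfolding l_coset_img by blast
          then have "x \<in> T <#> H" using b unfolding mem_set_mult by blast
          then show "x \<in> ((b <# H) \<inter> T) \<union> ((T <#> H) - T)" using x by blast
        qed
        have "card H = card (b <# H)" unfolding l_coset_img using bc Hc by (simp add: card_lmult)
        also have "\<dots> \<le> card (((b <# H) \<inter> T) \<union> ((T <#> H) - T))"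
          by (rule card_mono[OF _ bHsub]) (use fT fTH in simp)
        also have "\<dots> \<le> card ((b <# H) \<inter> T) + card ((T <#> H) - T)" by (rule card_Un_le)
        also have "card ((T <#> H) - T) = card (T <#> H) - card T" using T_TH fT by (simp add: card_Diff_subset)
        finally show ?thesis using card_mono[OF fTH T_TH] by linarith
      qed
      have m1: "card ((a <# H) \<inter> S) \<le> card ((a <# H) \<inter> A)"
        by (rule card_mono) (use assms(3) SA in auto)
      have m2: "card ((b <# H) \<inter> T) \<le> card ((b <# H) \<inter> B)"
        by (rule card_mono) (use assms(6) TB in auto)
      show False using hyp cS cT m1 m2 kin lt by linarith
    qed
  qed
qed

end
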